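(* Let $Z_1,\ldots,Z_{n+1}$ be i.i.d. from an arbitrary distribution $\mathcal P$, $V$ a fixed score function, $\alpha\in(0,1)$. Fix a finite grid $\mathcal G\subset[0,1]$ containing $0$ and $1$. For $a\in\mathcal G$ let $S(a)=\frac{1}{n+1}\sum_{i=1}^{n+1}\mathbb 1\{V_i\le Q(a;\hat{\mathcal F}_i)\}$. Let $\tilde\alpha_1=\min\{a\in\mathcal G:S(a)\ge\alpha\}$, $\tilde\alpha_2=\max\{a\in\mathcal G:S(a)<\alpha\}$, $\alpha_1=S(\tilde\alpha_1)$, $\alpha_2=S(\tilde\alpha_2)$, and let $\tilde\alpha=\tilde\alpha_1$ with probability $\frac{\alpha-\alpha_2}{\alpha_1-\alpha_2}$ and $\tilde\alpha=\tilde\alpha_2$ with probability $\frac{\alpha_1-\alpha}{\alpha_1-\alpha_2}$, using a randomization independent of the data. Then $\mathbb P\{V_{n+1}\le Q(\tilde\alpha;\hat{\mathcal F})\}=\alpha$.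
   Context: Data: $Z_i=(X_i,Y_i)\in\mathbb R^p\times\mathbb R$, $i=1,\ldots,n+1$; $X=\{X_1,\ldots,X_{n+1}\}$ (unordered). A localizer is a function $H(x_1,x_2,X)\in[0,1]$ of $x_1,x_2\in\mathbb R^p$ and of the unordered set $X$, satisfying $H(x,x,X)=1$ for all $x$. Write $H_{i,j}=H(X_i,X_j,X)$ and $p^H_{i,j}=H_{i,j}/\sum_{k=1}^{n+1}H_{i,k}$. For a probability distribution $\mathcal F$ on $\mathbb R\cup\{\infty\}$ and $a\in[0,1]$, $Q(a;\mathcal F)=\inf\{t:\mathbb P_{T\sim\mathcal F}(T\le t)\ge a\}$ (with $Q(0;\mathcal F)=-\infty$); $\delta_v$ denotes the point mass at $v$. A fixed score function is a deterministic measurable $V:\mathbb R^p\times\mathbb R\to[0,\infty)$ not depending on the data; $V_i=V(Z_i)$. Define $\hat{\mathcal F}_i=\sum_{j=1}^{n+1}p^H_{i,j}\delta_{V_j}$ for $i=1,\ldots,n+1$, and $\hat{\mathcal F}=\sum_{j=1}^{n}p^H_{n+1,j}\delta_{V_j}+p^H_{n+1,n+1}\delta_{\infty}$. *)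

theory Defs
  imports "HOL-Probability.Probability"
begin

text \<open>Data points are indexed 1..n+1; the point with index n+1 is the test point.
  A data sample is z :: nat => ('x * real), with z i = (X_i, Y_i).\<close>

definition Xms :: "nat \<Rightarrow> (nat \<Rightarrow> 'x \<times> real) \<Rightarrow> 'x multiset" where
  "Xms n z = image_mset (\<lambda>i. fst (z i)) (mset_set {1..n+1})"

definition Hmat :: "('x \<Rightarrow> 'x \<Rightarrow> 'x multiset \<Rightarrow> real) \<Rightarrow> nat \<Rightarrow> (nat \<Rightarrow> 'x \<times> real)
    \<Rightarrow> nat \<Rightarrow> nat \<Rightarrow> real" where
  "Hmat H n z i j = H (fst (z i)) (fst (z j)) (Xms n z)"

definition pH :: "('x \<Rightarrow> 'x \<Rightarrow> 'x multiset \<Rightarrow> real) \<Rightarrow> nat \<Rightarrow> (nat \<Rightarrow> 'x \<times> real)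
    \<Rightarrow> nat \<Rightarrow> nat \<Rightarrow> real" where
  "pH H n z i j = Hmat H n z i j / (\<Sum>k\<in>{1..n+1}. Hmat H n z i k)"

text \<open>For a = 0 every t qualifies, so the infimum is -infinity, matching Q(0;F) = -infinity.\<close>
definition wquantile :: "real \<Rightarrow> nat set \<Rightarrow> (nat \<Rightarrow> real) \<Rightarrow> (nat \<Rightarrow> ereal) \<Rightarrow> ereal" where
  "wquantile a J w v = Inf {t. a \<le> (\<Sum>j\<in>J. if v j \<le> t then w j else 0)}"

definition Fi_quant :: "('x \<Rightarrow> 'x \<Rightarrow> 'x multiset \<Rightarrow> real) \<Rightarrow> ('x \<times> real \<Rightarrow> real) \<Rightarrow> nat
    \<Rightarrow> (nat \<Rightarrow> 'x \<times> real) \<Rightarrow> nat \<Rightarrow> real \<Rightarrow> ereal" where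
  "Fi_quant H V n z i a = wquantile a {1..n+1} (pH H n z i) (\<lambda>j. ereal (V (z j)))"

definition Ftest_quant :: "('x \<Rightarrow> 'x \<Rightarrow> 'x multiset \<Rightarrow> real) \<Rightarrow> ('x \<times> real \<Rightarrow> real) \<Rightarrow> nat
    \<Rightarrow> (nat \<Rightarrow> 'x \<times> real) \<Rightarrow> real \<Rightarrow> ereal" where
  "Ftest_quant H V n z a = wquantile a {1..n+1} (pH H n z (n+1))
      (\<lambda>j. if j = n+1 then \<infinity> else ereal (V (z j)))"

definition Sfun :: "('x \<Rightarrow> 'x \<Rightarrow> 'x multiset \<Rightarrow> real) \<Rightarrow> ('x \<times> real \<Rightarrow> real) \<Rightarrow> nat
    \<Rightarrow> (nat \<Rightarrow> 'x \<times> real) \<Rightarrow> real \<Rightarrow> real" where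
  "Sfun H V n z a = (\<Sum>i\<in>{1..n+1}. if ereal (V (z i)) \<le> Fi_quant H V n z i a then 1 else 0)
      / real (n+1)"

definition alpha_t1 :: "real set \<Rightarrow> ('x \<Rightarrow> 'x \<Rightarrow> 'x multiset \<Rightarrow> real) \<Rightarrow> ('x \<times> real \<Rightarrow> real)
    \<Rightarrow> nat \<Rightarrow> real \<Rightarrow> (nat \<Rightarrow> 'x \<times> real) \<Rightarrow> real" where
  "alpha_t1 G H V n \<alpha> z = Min {a\<in>G. \<alpha> \<le> Sfun H V n z a}"

definition alpha_t2 :: "real set \<Rightarrow> ('x \<Rightarrow> 'x \<Rightarrow> 'x multiset \<Rightarrow> real) \<Rightarrow> ('x \<times> real \<Rightarrow> real)
    \<Rightarrow> nat \<Rightarrow> real \<Rightarrow> (nat \<Rightarrow> 'x \<times> real) \<Rightarrow> real" where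
  "alpha_t2 G H V n \<alpha> z = Max {a\<in>G. Sfun H V n z a < \<alpha>}"

text \<open>Randomized choice driven by an auxiliary u ~ Uniform[0,1] independent of the data:
  tilde alpha = tilde alpha_1 with probability (alpha - alpha_2)/(alpha_1 - alpha_2),
  and tilde alpha_2 otherwise.\<close>
definition alpha_tilde :: "real set \<Rightarrow> ('x \<Rightarrow> 'x \<Rightarrow> 'x multiset \<Rightarrow> real) \<Rightarrow> ('x \<times> real \<Rightarrow> real)
    \<Rightarrow> nat \<Rightarrow> real \<Rightarrow> (nat \<Rightarrow> 'x \<times> real) \<Rightarrow> real \<Rightarrow> real" where
  "alpha_tilde G H V n \<alpha> z u =
     (let a1 = alpha_t1 G H V n \<alpha> z; a2 = alpha_t2 G H V n \<alpha> z;
          s1 = Sfun H V n z a1; s2 = Sfun H V n z a2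
      in if u < (\<alpha> - s2) / (s1 - s2) then a1 else a2)"

end

theory Submission
  imports Defs
begin


lemma wq_char:
  fixes v :: "nat \<Rightarrow> ereal"
  assumes fin: "finite J" and w: "\<And>j. j \<in> J \<Longrightarrow> 0 \<le> w j"
  shows "(ereal v0 \<le> wquantile a J w v) \<longleftrightarrow> (\<Sum>j\<in>J. if v j < ereal v0 then w j else 0) < a"
proof
  assume L: "(\<Sum>j\<in>J. if v j < ereal v0 then w j else 0) < a"
  show "ereal v0 \<le> wquantile a J w v"
    unfolding wquantile_def
  proof (rule Inf_greatest, clarsimp)
    fix t assume t: "a \<le> (\<Sum>j\<in>J. if v j \<le> t then w j else 0)"
    show "ereal v0 \<le> t"
    proof (rule ccontr)
      assume "\<not> ereal v0 \<le> t"
      then have tv: "t < ereal v0" by simp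
      have "(\<Sum>j\<in>J. if v j \<le> t then w j else 0) \<le> (\<Sum>j\<in>J. if v j < ereal v0 then w j else 0)"
        by (rule sum_mono) (use tv w in auto)
      with t L show False by linarith
    qed
  qed
next
  assume Q: "ereal v0 \<le> wquantile a J w v"
  define T where "T = insert (-\<infinity>) {v j |j. j \<in> J \<and> v j < ereal v0}"
  have Tfin: "finite T" using fin unfolding T_def by auto
  define t0 where "t0 = Max T"
  have t0in: "t0 \<in> T" unfolding t0_def using Tfin by (intro Max_in) (auto simp: T_def)
  have t0lt: "t0 < ereal v0" using t0in by (auto simp: T_def)
  have geq: "\<And>j. j \<in> J \<Longrightarrow> (v j \<le> t0) = (v j < ereal v0)"
  proof -
    fix j assume j: "j \<in> J"
    show "(v j \<le> t0) = (v j < ereal v0)"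
    proof
      assume "v j \<le> t0" then show "v j < ereal v0" using t0lt by simp
    next
      assume "v j < ereal v0"
      then have "v j \<in> T" using j by (auto simp: T_def)
      then show "v j \<le> t0" unfolding t0_def using Tfin by simp
    qed
  qed
  have Feq: "(\<Sum>j\<in>J. if v j \<le> t0 then w j else 0) = (\<Sum>j\<in>J. if v j < ereal v0 then w j else 0)"
    by (rule sum.cong) (auto simp: geq)
  show "(\<Sum>j\<in>J. if v j < ereal v0 then w j else 0) < a"
  proof (rule ccontr)
    assume "\<not> ?thesis"
    then have "a \<le> (\<Sum>j\<in>J. if v j \<le> t0 then w j else 0)" using Feq by simp
    then have "wquantile a J w v \<le> t0" unfolding wquantile_def by (intro Inf_lower) simp
    with Q t0lt show False by simp
  qed
qed

definition Lf :: "('x \<Rightarrow> 'x \<Rightarrow> 'x multiset \<Rightarrow> real) \<Rightarrow> ('x \<times> real \<Rightarrow> real) \<Rightarrow> nat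
    \<Rightarrow> (nat \<Rightarrow> 'x \<times> real) \<Rightarrow> nat \<Rightarrow> real" where
  "Lf H V n z i = (\<Sum>j\<in>{1..n+1}. if V (z j) < V (z i) then pH H n z i j else 0)"

lemma pH_nonneg:
  assumes "\<forall>x1 x2 X. 0 \<le> H x1 x2 X \<and> H x1 x2 X \<le> 1"
  shows "0 \<le> pH H n z i j"
  using assms unfolding pH_def Hmat_def
  by (intro divide_nonneg_nonneg sum_nonneg) auto

lemma Fi_char:
  assumes "\<forall>x1 x2 X. 0 \<le> H x1 x2 X \<and> H x1 x2 X \<le> 1"
  shows "(ereal (V (z i)) \<le> Fi_quant H V n z i a) \<longleftrightarrow> Lf H V n z i < a"
  unfolding Fi_quant_def Lf_def
  by (subst wq_char) (auto intro: pH_nonneg[OF assms])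

lemma Ftest_char:
  assumes "\<forall>x1 x2 X. 0 \<le> H x1 x2 X \<and> H x1 x2 X \<le> 1"
  shows "(ereal (V (z (n+1))) \<le> Ftest_quant H V n z a) \<longleftrightarrow> Lf H V n z (n+1) < a"
  unfolding Ftest_quant_def Lf_def
  apply (subst wq_char)
    apply (auto intro: pH_nonneg[OF assms])
  done

lemma Sfun_char:
  assumes "\<forall>x1 x2 X. 0 \<le> H x1 x2 X \<and> H x1 x2 X \<le> 1"
  shows "Sfun H V n z a = (\<Sum>i\<in>{1..n+1}. if Lf H V n z i < a then 1 else 0) / real (n+1)"
  unfolding Sfun_def using Fi_char[OF assms] by simp



lemma Xms_perm:
  assumes bij: "bij_betw \<sigma> {1..n+1} {1..n+1}" and z': "\<forall>j\<in>{1..n+1}. z' j = z (\<sigma> j)"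
  shows "Xms n z' = Xms n z"
proof -
  have "Xms n z' = image_mset (\<lambda>i. fst (z (\<sigma> i))) (mset_set {1..n+1})"
    unfolding Xms_def by (rule image_mset_cong) (use z' in auto)
  also have "\<dots> = image_mset (\<lambda>i. fst (z i)) (image_mset \<sigma> (mset_set {1..n+1}))"
    by (simp add: multiset.map_comp o_def)
  also have "image_mset \<sigma> (mset_set {1..n+1}) = mset_set {1..n+1}"
    using bij by (simp add: image_mset_mset_set bij_betw_def)
  finally show ?thesis unfolding Xms_def .
qed

lemma Lf_perm:
  assumes bij: "bij_betw \<sigma> {1..n+1} {1..n+1}" and z': "\<forall>j\<in>{1..n+1}. z' j = z (\<sigma> j)"
    and k: "k \<in> {1..n+1}"
  shows "Lf H V n z' k = Lf H V n z (\<sigma> k)"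
proof -
  have X: "Xms n z' = Xms n z" by (rule Xms_perm[OF bij z'])
  have Hm: "\<And>i j. i \<in> {1..n+1} \<Longrightarrow> j \<in> {1..n+1} \<Longrightarrow> Hmat H n z' i j = Hmat H n z (\<sigma> i) (\<sigma> j)"
    unfolding Hmat_def using X z' by simp
  have sk: "\<sigma> k \<in> {1..n+1}" using bij k by (auto simp: bij_betw_def)
  have S: "(\<Sum>j\<in>{1..n+1}. Hmat H n z' k j) = (\<Sum>j\<in>{1..n+1}. Hmat H n z (\<sigma> k) j)"
  proof -
    have "(\<Sum>j\<in>{1..n+1}. Hmat H n z' k j) = (\<Sum>j\<in>{1..n+1}. Hmat H n z (\<sigma> k) (\<sigma> j))"
      by (rule sum.cong) (use Hm k in auto)
    also have "\<dots> = (\<Sum>j\<in>{1..n+1}. Hmat H n z (\<sigma> k) j)"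
      by (rule sum.reindex_bij_betw[OF bij])
    finally show ?thesis .
  qed
  have P: "\<And>j. j \<in> {1..n+1} \<Longrightarrow> pH H n z' k j = pH H n z (\<sigma> k) (\<sigma> j)"
    unfolding pH_def using S Hm k by simp
  have "Lf H V n z' k = (\<Sum>j\<in>{1..n+1}. if V (z (\<sigma> j)) < V (z (\<sigma> k)) then pH H n z (\<sigma> k) (\<sigma> j) else 0)"
    unfolding Lf_def by (rule sum.cong) (use P z' k in auto)
  also have "\<dots> = Lf H V n z (\<sigma> k)"
    unfolding Lf_def by (rule sum.reindex_bij_betw[OF bij])
  finally show ?thesis .
qed

lemma Sfun_perm:
  assumes Hb: "\<forall>x1 x2 X. 0 \<le> H x1 x2 X \<and> H x1 x2 X \<le> 1"
    and bij: "bij_betw \<sigma> {1..n+1} {1..n+1}" and z': "\<forall>j\<in>{1..n+1}. z' j = z (\<sigma> j)"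
  shows "Sfun H V n z' = Sfun H V n z"
proof
  fix a
  have "(\<Sum>i\<in>{1..n+1}. if Lf H V n z' i < a then 1 else 0 :: real)
      = (\<Sum>i\<in>{1..n+1}. if Lf H V n z (\<sigma> i) < a then 1 else 0)"
    by (rule sum.cong) (use Lf_perm[OF bij z'] in auto)
  also have "\<dots> = (\<Sum>i\<in>{1..n+1}. if Lf H V n z i < a then 1 else 0)"
    by (rule sum.reindex_bij_betw[OF bij])
  finally show "Sfun H V n z' a = Sfun H V n z a"
    unfolding Sfun_char[OF Hb] by simp
qed

lemma alpha_tilde_perm:
  assumes Hb: "\<forall>x1 x2 X. 0 \<le> H x1 x2 X \<and> H x1 x2 X \<le> 1"
    and bij: "bij_betw \<sigma> {1..n+1} {1..n+1}" and z': "\<forall>j\<in>{1..n+1}. z' j = z (\<sigma> j)"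
  shows "alpha_tilde G H V n \<alpha> z' u = alpha_tilde G H V n \<alpha> z u"
  unfolding alpha_tilde_def alpha_t1_def alpha_t2_def Sfun_perm[OF Hb bij z'] ..

definition swp :: "nat \<Rightarrow> nat \<Rightarrow> nat \<Rightarrow> nat" where
  "swp i m k = (if k = i then m else if k = m then i else k)"

lemma swp_bij: "i \<in> A \<Longrightarrow> m \<in> A \<Longrightarrow> bij_betw (swp i m) A A"
  by (rule bij_betw_byWitness[where f'="swp i m"]) (auto simp: swp_def)

lemma Lf_lt1:
  assumes Hb: "\<forall>x1 x2 X. 0 \<le> H x1 x2 X \<and> H x1 x2 X \<le> 1" and Hd: "\<forall>x X. H x x X = 1"
    and i: "i \<in> {1..n+1}"
  shows "0 \<le> Lf H V n z i \<and> Lf H V n z i < 1"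
proof
  show "0 \<le> Lf H V n z i" unfolding Lf_def by (intro sum_nonneg) (auto intro: pH_nonneg[OF Hb])
  have Hii: "Hmat H n z i i = 1" using Hd by (simp add: Hmat_def)
  have Sge: "1 \<le> (\<Sum>k\<in>{1..n+1}. Hmat H n z i k)"
  proof -
    have "Hmat H n z i i \<le> (\<Sum>k\<in>{1..n+1}. Hmat H n z i k)"
      by (rule member_le_sum) (use i Hb in \<open>auto simp: Hmat_def\<close>)
    with Hii show ?thesis by simp
  qed
  have sum1: "(\<Sum>j\<in>{1..n+1}. pH H n z i j) = 1"
    unfolding pH_def using Sge by (simp add: sum_divide_distrib[symmetric])
  have "Lf H V n z i < (\<Sum>j\<in>{1..n+1}. pH H n z i j)"
    unfolding Lf_def
  proof (rule sum_strict_mono_ex1)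
    show "\<forall>x\<in>{1..n+1}. (if V (z x) < V (z i) then pH H n z i x else 0) \<le> pH H n z i x"
      using pH_nonneg[OF Hb] by auto
    have "0 < pH H n z i i" unfolding pH_def using Hii Sge by simp
    then show "\<exists>a\<in>{1..n+1}. (if V (z a) < V (z i) then pH H n z i a else 0) < pH H n z i a"
      using i by (intro bexI[of _ i]) auto
  qed simp
  with sum1 show "Lf H V n z i < 1" by simp
qed



lemma S_bounds:
  assumes Hb: "\<forall>x1 x2 X. 0 \<le> H x1 x2 X \<and> H x1 x2 X \<le> 1" and Hd: "\<forall>x X. H x x X = 1"
    and G: "finite G" "0 \<in> G" "1 \<in> G" and al: "0 < \<alpha>" "\<alpha> < 1"
  shows "\<alpha> \<le> Sfun H V n z (alpha_t1 G H V n \<alpha> z) \<and> Sfun H V n z (alpha_t2 G H V n \<alpha> z) < \<alpha>"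
proof -
  have S1: "Sfun H V n z 1 = 1"
    unfolding Sfun_char[OF Hb] using Lf_lt1[OF Hb Hd] by simp
  have S0: "Sfun H V n z 0 = 0"
  proof -
    have "\<forall>i\<in>{1..n+1}. \<not> Lf H V n z i < 0" using Lf_lt1[OF Hb Hd] by (simp add: not_less)
    then have "(\<Sum>i\<in>{1..n+1}. if Lf H V n z i < 0 then 1 else 0 :: real) = 0"
      by (intro sum.neutral) auto
    then show ?thesis unfolding Sfun_char[OF Hb] by simp
  qed
  have A1: "1 \<in> {a\<in>G. \<alpha> \<le> Sfun H V n z a}" using S1 G al by simp
  have A2: "0 \<in> {a\<in>G. Sfun H V n z a < \<alpha>}" using S0 G al by simp
  have "alpha_t1 G H V n \<alpha> z \<in> {a\<in>G. \<alpha> \<le> Sfun H V n z a}"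
    unfolding alpha_t1_def using A1 G by (intro Min_in) auto
  moreover have "alpha_t2 G H V n \<alpha> z \<in> {a\<in>G. Sfun H V n z a < \<alpha>}"
    unfolding alpha_t2_def using A2 G by (intro Max_in) auto
  ultimately show ?thesis by simp
qed

lemma inner:
  assumes Hb: "\<forall>x1 x2 X. 0 \<le> H x1 x2 X \<and> H x1 x2 X \<le> 1" and Hd: "\<forall>x X. H x x X = 1"
    and G: "finite G" "0 \<in> G" "1 \<in> G" and al: "0 < \<alpha>" "\<alpha> < 1"
  shows "(\<integral>u. Sfun H V n z (alpha_tilde G H V n \<alpha> z u) \<partial>uniform_measure lborel {0..1::real}) = \<alpha>"
proof -
  define a1 where "a1 = alpha_t1 G H V n \<alpha> z"
  define a2 where "a2 = alpha_t2 G H V n \<alpha> z"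
  define s1 where "s1 = Sfun H V n z a1"
  define s2 where "s2 = Sfun H V n z a2"
  define c where "c = (\<alpha> - s2) / (s1 - s2)"
  have b: "\<alpha> \<le> s1" "s2 < \<alpha>" using S_bounds[OF Hb Hd G al, of V n z] by (simp_all add: s1_def s2_def a1_def a2_def)
  have c01: "0 \<le> c" "c \<le> 1" using b by (simp_all add: c_def field_simps)
  have eq: "\<And>u. Sfun H V n z (alpha_tilde G H V n \<alpha> z u) = s2 + (s1 - s2) * indicator {..<c} u"
    unfolding alpha_tilde_def Let_def
    by (fold a1_def a2_def, fold s1_def s2_def, fold c_def) (simp add: indicator_def s1_def s2_def)
  let ?N = "uniform_measure lborel {0..1::real}"
  have pN: "prob_space ?N" by (rule prob_space_uniform_measure) simp_all
  have mc: "measure ?N {..<c} = c"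
  proof -
    have "measure ?N {..<c} = measure lborel ({0..1} \<inter> {..<c}) / measure lborel {0..1::real}"
      by (rule measure_uniform_measure) simp_all
    also have "{0..1} \<inter> {..<c} = {0..<c}" using c01 by auto
    finally show ?thesis using c01 by simp
  qed
  have "(\<integral>u. Sfun H V n z (alpha_tilde G H V n \<alpha> z u) \<partial>?N) = (\<integral>u. s2 + (s1 - s2) * indicator {..<c} u \<partial>?N)"
    by (simp add: eq)
  also have "\<dots> = (\<integral>u. s2 \<partial>?N) + (\<integral>u. (s1 - s2) * indicator {..<c} u \<partial>?N)"
  proof (rule Bochner_Integration.integral_add)
    show "integrable ?N (\<lambda>u. s2)" using pN by (simp add: prob_space.finite_measure finite_measure.integrable_const)
    show "integrable ?N (\<lambda>u. (s1 - s2) * indicator {..<c} u)"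
    proof (intro integrable_mult_right integrable_real_indicator)
      show "{..<c} \<in> sets ?N" by simp
      have "emeasure ?N {..<c} \<le> 1" by (rule prob_space.emeasure_le_1[OF pN])
      then show "emeasure ?N {..<c} < \<infinity>" using ennreal_one_less_top by (metis infinity_ennreal_def le_less_trans)
    qed
  qed
  also have "(\<integral>u. (s1 - s2) * indicator {..<c} u \<partial>?N) = (s1 - s2) * (\<integral>u. indicator {..<c} u \<partial>?N)"
    by (rule integral_mult_right_zero)
  also have "(\<integral>u. indicator {..<c} u \<partial>?N) = measure ?N {..<c}"
    by (simp add: integral_indicator)
  also have "(\<integral>u. s2 \<partial>?N) = s2"
    using pN by (simp add: prob_space.prob_space)
  also note mc
  finally have "(\<integral>u. Sfun H V n z (alpha_tilde G H V n \<alpha> z u) \<partial>?N) = s2 + (s1 - s2) * c" .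
  moreover have "s2 + (s1 - s2) * c = \<alpha>"
  proof -
    have "s1 - s2 \<noteq> 0" using b by simp
    then show ?thesis unfolding c_def by simp
  qed
  ultimately show ?thesis by simp
qed



lemma Sfun_one:
  assumes Hb: "\<forall>x1 x2 X. 0 \<le> H x1 x2 X \<and> H x1 x2 X \<le> 1" and Hd: "\<forall>x X. H x x X = 1"
  shows "Sfun H V n z 1 = 1"
  unfolding Sfun_char[OF Hb] using Lf_lt1[OF Hb Hd] by simp

lemma Sfun_zero:
  assumes Hb: "\<forall>x1 x2 X. 0 \<le> H x1 x2 X \<and> H x1 x2 X \<le> 1" and Hd: "\<forall>x X. H x x X = 1"
  shows "Sfun H V n z 0 = 0"
proof -
  have "\<forall>i\<in>{1..n+1}. \<not> Lf H V n z i < 0" using Lf_lt1[OF Hb Hd] by (simp add: not_less)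
  then have "(\<Sum>i\<in>{1..n+1}. if Lf H V n z i < 0 then 1 else 0 :: real) = 0"
    by (intro sum.neutral) auto
  then show ?thesis unfolding Sfun_char[OF Hb] by simp
qed

lemma t1_iff:
  assumes Hb: "\<forall>x1 x2 X. 0 \<le> H x1 x2 X \<and> H x1 x2 X \<le> 1" and Hd: "\<forall>x X. H x x X = 1"
    and G: "finite G" "1 \<in> G" and al: "\<alpha> < 1"
  shows "alpha_t1 G H V n \<alpha> z = x \<longleftrightarrow>
     (x \<in> G \<and> \<alpha> \<le> Sfun H V n z x \<and> (\<forall>b\<in>G. \<alpha> \<le> Sfun H V n z b \<longrightarrow> x \<le> b))"
proof -
  have "1 \<in> {a\<in>G. \<alpha> \<le> Sfun H V n z a}" using Sfun_one[OF Hb Hd] G al by simp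
  then have ne: "{a\<in>G. \<alpha> \<le> Sfun H V n z a} \<noteq> {}" by blast
  show ?thesis unfolding alpha_t1_def using Min_eq_iff[OF _ ne] G by auto
qed

lemma t2_iff:
  assumes Hb: "\<forall>x1 x2 X. 0 \<le> H x1 x2 X \<and> H x1 x2 X \<le> 1" and Hd: "\<forall>x X. H x x X = 1"
    and G: "finite G" "0 \<in> G" and al: "0 < \<alpha>"
  shows "alpha_t2 G H V n \<alpha> z = x \<longleftrightarrow>
     (x \<in> G \<and> Sfun H V n z x < \<alpha> \<and> (\<forall>b\<in>G. Sfun H V n z b < \<alpha> \<longrightarrow> b \<le> x))"
proof -
  have "0 \<in> {a\<in>G. Sfun H V n z a < \<alpha>}" using Sfun_zero[OF Hb Hd] G al by simp
  then have ne: "{a\<in>G. Sfun H V n z a < \<alpha>} \<noteq> {}" by blast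
  show ?thesis unfolding alpha_t2_def using Max_eq_iff[OF _ ne] G by auto
qed



theorem corollary3:
  fixes D :: "((real^('p::finite)) \<times> real) measure"
    and V :: "(real^('p::finite)) \<times> real \<Rightarrow> real"
    and H :: "real^('p::finite) \<Rightarrow> real^'p \<Rightarrow> (real^'p) multiset \<Rightarrow> real"
    and n :: nat and \<alpha> :: real and G :: "real set"
  assumes "prob_space D" and "sets D = sets borel"
    and "\<forall>z. 0 \<le> V z" and "V \<in> borel_measurable borel"
    and "\<forall>x1 x2 X. 0 \<le> H x1 x2 X \<and> H x1 x2 X \<le> 1"
    and "\<forall>x X. H x x X = 1"
    and "\<forall>i\<in>{1..n+1}. \<forall>j\<in>{1..n+1}.
           (\<lambda>z. Hmat H n z i j) \<in> borel_measurable (\<Pi>\<^sub>M i\<in>{1..n+1}. D)"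
    and "0 < \<alpha>" and "\<alpha> < 1"
    and "finite G" and "G \<subseteq> {0..1}" and "0 \<in> G" and "1 \<in> G"
  shows "measure ((\<Pi>\<^sub>M i\<in>{1..n+1}. D) \<Otimes>\<^sub>M uniform_measure lborel {0..1::real})
           {(z, u) \<in> space ((\<Pi>\<^sub>M i\<in>{1..n+1}. D) \<Otimes>\<^sub>M uniform_measure lborel {0..1::real}).
              ereal (V (z (n+1))) \<le> Ftest_quant H V n z (alpha_tilde G H V n \<alpha> z u)}
         = \<alpha>"
proof -
  note Hb = assms(5) and Hd = assms(6)
  define I where "I = {1..n+1}"
  define M where "M = (\<Pi>\<^sub>M i\<in>I. D)"
  define N where "N = uniform_measure lborel {0..1::real}"
  have pD: "prob_space D" by (rule assms(1))
  have pM: "prob_space M" unfolding M_def by (rule prob_space_PiM) (rule pD)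
  have pN: "prob_space N" unfolding N_def by (rule prob_space_uniform_measure) simp_all
  interpret PP: pair_prob_space M N
    unfolding pair_prob_space_def pair_sigma_finite_def
    using pM pN by (simp add: prob_space_imp_sigma_finite)
  have sN: "sets N = sets borel" unfolding N_def by simp
  have Vb: "V \<in> borel_measurable D"
    by (subst measurable_cong_sets[OF assms(2) refl]) (rule assms(4))
  have Vz: "(\<lambda>z. V (z j)) \<in> borel_measurable M" if j: "j \<in> I" for j
    unfolding M_def by (rule measurable_compose[OF measurable_component_singleton[OF j] Vb])
  have Hm: "(\<lambda>z. Hmat H n z i j) \<in> borel_measurable M" if "i \<in> I" "j \<in> I" for i j
    using assms(7) that unfolding M_def I_def by blast
  have pHm: "(\<lambda>z. pH H n z i j) \<in> borel_measurable M" if "i \<in> I" "j \<in> I" for i j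
    unfolding pH_def
    by (intro borel_measurable_divide borel_measurable_sum Hm) (use that in \<open>auto simp: I_def\<close>)
  have Lm: "(\<lambda>z. Lf H V n z i) \<in> borel_measurable M" if i: "i \<in> I" for i
    unfolding Lf_def I_def[symmetric]
  proof (rule borel_measurable_sum)
    fix j assume j: "j \<in> I"
    note [measurable] = Vz[OF i] Vz[OF j] pHm[OF i j]
    show "(\<lambda>z. if V (z j) < V (z i) then pH H n z i j else 0) \<in> borel_measurable M" by measurable
  qed
  have Schar: "\<And>z a. Sfun H V n z a = (\<Sum>i\<in>I. if Lf H V n z i < a then 1 else 0) / real (n+1)"
    unfolding I_def by (rule Sfun_char[OF Hb])
  have Sm2: "(\<lambda>x. Sfun H V n (fst x) (snd x)) \<in> borel_measurable (M \<Otimes>\<^sub>M borel)"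
    unfolding Schar
  proof (intro borel_measurable_divide borel_measurable_sum)
    fix i assume i: "i \<in> I"
    note [measurable] = Lm[OF i]
    show "(\<lambda>x. if Lf H V n (fst x) i < snd x then 1 else 0 :: real) \<in> borel_measurable (M \<Otimes>\<^sub>M borel)"
      by measurable
  qed simp
  have Sm: "(\<lambda>z. Sfun H V n z a) \<in> borel_measurable M" for a
  proof -
    have "(\<lambda>z. (z, a)) \<in> measurable M (M \<Otimes>\<^sub>M borel)" by measurable
    from measurable_compose[OF this Sm2] show ?thesis by simp
  qed
  have Gfin: "finite G" by (rule assms(10))
  have a1m: "(\<lambda>z. alpha_t1 G H V n \<alpha> z) \<in> borel_measurable M"
  proof (rule borel_measurable_simple_function, unfold simple_function_def, intro conjI ballI)
    have "(\<lambda>z. alpha_t1 G H V n \<alpha> z) ` space M \<subseteq> G"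
      using t1_iff[OF Hb Hd Gfin assms(13) assms(9)] by blast
    then show "finite ((\<lambda>z. alpha_t1 G H V n \<alpha> z) ` space M)" using Gfin finite_subset by blast
    fix x
    have "(\<lambda>z. alpha_t1 G H V n \<alpha> z) -` {x} \<inter> space M =
       {z \<in> space M. x \<in> G \<and> \<alpha> \<le> Sfun H V n z x \<and> (\<forall>b\<in>G. \<alpha> \<le> Sfun H V n z b \<longrightarrow> x \<le> b)}"
      using t1_iff[OF Hb Hd Gfin assms(13) assms(9)] by blast
    also have "\<dots> \<in> sets M"
      using Gfin Sm by measurable
    finally show "(\<lambda>z. alpha_t1 G H V n \<alpha> z) -` {x} \<inter> space M \<in> sets M" .
  qed
  have a2m: "(\<lambda>z. alpha_t2 G H V n \<alpha> z) \<in> borel_measurable M"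
  proof (rule borel_measurable_simple_function, unfold simple_function_def, intro conjI ballI)
    have "(\<lambda>z. alpha_t2 G H V n \<alpha> z) ` space M \<subseteq> G"
      using t2_iff[OF Hb Hd Gfin assms(12) assms(8)] by blast
    then show "finite ((\<lambda>z. alpha_t2 G H V n \<alpha> z) ` space M)" using Gfin finite_subset by blast
    fix x
    have "(\<lambda>z. alpha_t2 G H V n \<alpha> z) -` {x} \<inter> space M =
       {z \<in> space M. x \<in> G \<and> Sfun H V n z x < \<alpha> \<and> (\<forall>b\<in>G. Sfun H V n z b < \<alpha> \<longrightarrow> b \<le> x)}"
      using t2_iff[OF Hb Hd Gfin assms(12) assms(8)] by blast
    also have "\<dots> \<in> sets M"
      using Gfin Sm by measurable
    finally show "(\<lambda>z. alpha_t2 G H V n \<alpha> z) -` {x} \<inter> space M \<in> sets M" .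
  qed
  have s1m: "(\<lambda>z. Sfun H V n z (alpha_t1 G H V n \<alpha> z)) \<in> borel_measurable M"
  proof -
    have "(\<lambda>z. (z, alpha_t1 G H V n \<alpha> z)) \<in> measurable M (M \<Otimes>\<^sub>M borel)" using a1m by measurable
    from measurable_compose[OF this Sm2] show ?thesis by simp
  qed
  have s2m: "(\<lambda>z. Sfun H V n z (alpha_t2 G H V n \<alpha> z)) \<in> borel_measurable M"
  proof -
    have "(\<lambda>z. (z, alpha_t2 G H V n \<alpha> z)) \<in> measurable M (M \<Otimes>\<^sub>M borel)" using a2m by measurable
    from measurable_compose[OF this Sm2] show ?thesis by simp
  qed
  have sndm: "snd \<in> borel_measurable (M \<Otimes>\<^sub>M N)"
    by (subst measurable_cong_sets[OF refl sN[symmetric]]) (rule measurable_snd)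
  have atm: "(\<lambda>x. alpha_tilde G H V n \<alpha> (fst x) (snd x)) \<in> borel_measurable (M \<Otimes>\<^sub>M N)"
    unfolding alpha_tilde_def Let_def
    using a1m a2m s1m s2m sndm by measurable
  have Fm: "(\<lambda>x. if Lf H V n (fst x) i < alpha_tilde G H V n \<alpha> (fst x) (snd x) then 1 else 0 :: real)
      \<in> borel_measurable (M \<Otimes>\<^sub>M N)" if i: "i \<in> I" for i
    using Lm[OF i] atm by measurable
  define F where "F i x = (if Lf H V n (fst x) i < alpha_tilde G H V n \<alpha> (fst x) (snd x) then 1 else 0 :: real)" for i x
  define P where "P = M \<Otimes>\<^sub>M N"
  have n1I: "n+1 \<in> I" unfolding I_def by simp
  have FmP: "F i \<in> borel_measurable P" if "i \<in> I" for i
    unfolding F_def P_def using Fm[OF that] by simp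
  have Fint: "integrable P (F i)" if "i \<in> I" for i
    unfolding P_def
    by (rule PP.integrable_const_bound[where B=1]) (auto simp: F_def intro: FmP[OF that, unfolded P_def])
  have swap: "integral\<^sup>L P (F (n+1)) = integral\<^sup>L P (F i)" if i: "i \<in> I" for i
  proof -
    define \<sigma> where "\<sigma> = swp i (n+1)"
    have bij: "bij_betw \<sigma> I I" unfolding \<sigma>_def by (rule swp_bij[OF i n1I])
    have sI: "\<sigma> k \<in> I" if "k \<in> I" for k using bij that by (auto simp: bij_betw_def)
    define f where "f = (\<lambda>\<omega>::nat \<Rightarrow> (real^'p) \<times> real. \<lambda>k\<in>I. \<omega> (\<sigma> k))"
    have fm: "f \<in> measurable M M"
      unfolding f_def M_def
      by (rule measurable_restrict) (rule measurable_component_singleton[OF sI])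
    have df: "distr M M f = M"
      unfolding f_def M_def
      using distr_PiM_reindex[of I "\<lambda>_. D" \<sigma> I] pD bij_betw_imp_inj_on[OF bij] sI by simp
    have dP0: "distr M M f \<Otimes>\<^sub>M distr N N (\<lambda>x. x) = distr (M \<Otimes>\<^sub>M N) (M \<Otimes>\<^sub>M N) (\<lambda>(x, y). (f x, y))"
      using pair_measure_distr[OF fm measurable_ident_sets[OF refl, of N]] pN
      by (simp add: prob_space_imp_sigma_finite)
    define \<Phi> where "\<Phi> = (\<lambda>x::(nat \<Rightarrow> (real^'p) \<times> real) \<times> real. (f (fst x), snd x))"
    have Phieq: "(\<lambda>(x, y). (f x, y)) = \<Phi>" unfolding \<Phi>_def by auto
    have dP: "distr P P \<Phi> = P" using dP0 df unfolding P_def Phieq by simp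
    have Phim: "\<Phi> \<in> measurable P P" unfolding \<Phi>_def P_def using fm by measurable
    have "integral\<^sup>L P (F (n+1)) = integral\<^sup>L (distr P P \<Phi>) (F (n+1))" using dP by simp
    also have "\<dots> = integral\<^sup>L P (\<lambda>x. F (n+1) (\<Phi> x))"
      by (rule integral_distr[OF Phim FmP[OF n1I]])
    also have "\<dots> = integral\<^sup>L P (F i)"
    proof (rule Bochner_Integration.integral_cong[OF refl])
      fix x :: "(nat \<Rightarrow> (real^'p) \<times> real) \<times> real"
      have z': "\<forall>j\<in>{1..n+1}. f (fst x) j = fst x (\<sigma> j)" unfolding f_def I_def by simp
      have bij': "bij_betw \<sigma> {1..n+1} {1..n+1}" using bij unfolding I_def .
      have "Lf H V n (f (fst x)) (n+1) = Lf H V n (fst x) (\<sigma> (n+1))"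
        by (rule Lf_perm[OF bij' z']) simp
      moreover have "\<sigma> (n+1) = i" unfolding \<sigma>_def swp_def by simp
      moreover have "alpha_tilde G H V n \<alpha> (f (fst x)) u = alpha_tilde G H V n \<alpha> (fst x) u" for u
        by (rule alpha_tilde_perm[OF Hb bij' z'])
      ultimately show "F (n+1) (\<Phi> x) = F i x" unfolding F_def \<Phi>_def by simp
    qed
    finally show ?thesis .
  qed
  have sumF: "(\<Sum>i\<in>I. F i x) = real (n+1) * Sfun H V n (fst x) (alpha_tilde G H V n \<alpha> (fst x) (snd x))" for x
    unfolding Schar F_def by simp
  define g where "g x = Sfun H V n (fst x) (alpha_tilde G H V n \<alpha> (fst x) (snd x))" for x
  have "integral\<^sup>L P (\<lambda>x. \<Sum>i\<in>I. F i x) = (\<Sum>i\<in>I. integral\<^sup>L P (F i))"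
    by (rule Bochner_Integration.integral_sum) (rule Fint)
  also have "\<dots> = (\<Sum>i\<in>I. integral\<^sup>L P (F (n+1)))" using swap by simp
  also have "\<dots> = real (n+1) * integral\<^sup>L P (F (n+1))" unfolding I_def by simp
  finally have e1: "real (n+1) * integral\<^sup>L P (F (n+1)) = real (n+1) * integral\<^sup>L P g"
    unfolding sumF g_def by simp
  have gint: "integrable P g"
  proof -
    have "integrable P (\<lambda>x. (\<Sum>i\<in>I. F i x) / real (n+1))"
      by (intro integrable_divide_zero Bochner_Integration.integrable_sum Fint)
    then show ?thesis unfolding sumF g_def by simp
  qed
  have "integral\<^sup>L P g = (\<integral>z. (\<integral>u. g (z, u) \<partial>N) \<partial>M)"
    unfolding P_def by (rule PP.integral_fst'[symmetric]) (use gint in \<open>simp add: P_def\<close>)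
  also have "\<dots> = (\<integral>z. \<alpha> \<partial>M)"
    unfolding g_def N_def
    by (rule Bochner_Integration.integral_cong[OF refl], simp only: fst_conv snd_conv)
       (rule inner[OF Hb Hd assms(10) assms(12) assms(13) assms(8) assms(9)])
  also have "\<dots> = \<alpha>" using pM by (simp add: prob_space.prob_space)
  finally have e2: "integral\<^sup>L P (F (n+1)) = \<alpha>" using e1 by simp
  define A where "A = {(z, u) \<in> space P. ereal (V (z (n+1))) \<le> Ftest_quant H V n z (alpha_tilde G H V n \<alpha> z u)}"
  have "integral\<^sup>L P (F (n+1)) = integral\<^sup>L P (indicator A)"
  proof (rule Bochner_Integration.integral_cong[OF refl])
    fix x assume x: "x \<in> space P"
    obtain z u where xe: "x = (z, u)" by force
    show "F (n+1) x = indicator A x"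
      using x Ftest_char[OF Hb, of V z n "alpha_tilde G H V n \<alpha> z u"]
      unfolding xe A_def F_def indicator_def by auto
  qed
  also have "\<dots> = measure P A"
  proof -
    have "A \<inter> space P = A" unfolding A_def by auto
    then show ?thesis by (metis Bochner_Integration.integral_indicator)
  qed
  finally have "measure P A = \<alpha>" using e2 by simp
  then show ?thesis unfolding A_def P_def M_def N_def I_def .
qed
end
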